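(* Let $G$ be a matrix Lie group with Lie algebra $\mathfrak{g}$ of dimension $n$. Let $X(t),\bar X(t)\in G$ be differentiable and satisfy $$\dot X = X[l]^\wedge + [r]^\wedge X,\qquad \dot{\bar X} = \bar X[\bar l]^\wedge + [\bar r]^\wedge \bar X,$$ where $l,r,\bar l,\bar r:\mathbb{R}\to\mathbb{R}^n$ are (possibly time-varying) inputs, and write $l=\bar l+u_l$, $r=\bar r+u_r$. Define the left-invariant error $\eta_l = X^{-1}\bar X$ and suppose $\eta_l(t)=\exp([\zeta_l(t)]^\wedge)$ for a differentiable curve $\zeta_l(t)\in\mathbb{R}^n$ such that the linear map $\sum_{k\ge 0}\frac{(-1)^k}{(k+1)!}(ad_{[\zeta_l]^\wedge})^k$ is invertible (equivalently, $ad_{[\zeta_l]^\wedge}$ has no eigenvalue in $2\pi i\mathbb{Z}\setminus\{0\}$). Then $$\dot\zeta_l = -ad_{[\bar l]^\wedge}\,\zeta_l + U_l\,\big(u_l + Ad_{X^{-1}}u_r\big),\qquad U_l \equiv -\frac{ad_{[\zeta_l]^\wedge}\exp(-ad_{[\zeta_l]^\wedge})}{I-\exp(-ad_{[\zeta_l]^\wedge})},$$ and $U_l$ is invertible with $$U_l^{-1} = -\sum_{k=0}^{\infty}\frac{(ad_{[\zeta_l]^\wedge})^k}{(k+1)!}.$$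
   Context: $[\cdot]^\wedge:\mathbb{R}^n\to\mathfrak{g}$ is a fixed linear isomorphism (the "wedge" map) with inverse $[\cdot]^\vee$. For $\zeta\in\mathbb{R}^n$, $ad_{[\zeta]^\wedge}$ denotes the $n\times n$ matrix of the linear map $y\mapsto\big([\zeta]^\wedge[y]^\wedge-[y]^\wedge[\zeta]^\wedge\big)^\vee$. For $X\in G$, $Ad_X$ denotes the $n\times n$ matrix of $y\mapsto (X[y]^\wedge X^{-1})^\vee$. $\exp$ is the matrix exponential. Expressions such as $\frac{ad\,\exp(-ad)}{I-\exp(-ad)}$ are understood as the matrix functions defined via power series in $ad_{[\zeta_l]^\wedge}$ (all such factors commute); in particular $\frac{I-\exp(-ad)}{ad}=\sum_{k\ge0}\frac{(-1)^k}{(k+1)!}ad^k$ and $\frac{ad}{I-\exp(-ad)}$ is its inverse. *)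

theory Defs
  imports "HOL-Analysis.Analysis"
begin

definition mpow :: "real^'m^'m \<Rightarrow> nat \<Rightarrow> real^'m^'m" where
  "mpow A k = ((\<lambda>B. A ** B) ^^ k) (mat 1)"

definition mexp :: "real^'m^'m \<Rightarrow> real^'m^'m" where
  "mexp A = (\<Sum>k. (1 / fact k) *\<^sub>R mpow A k)"

definition matrix_Lie_group :: "(real^'m^'m) set \<Rightarrow> bool" where
  "matrix_Lie_group G \<longleftrightarrow>
     G \<subseteq> {A. invertible A} \<and> mat 1 \<in> G \<and>
     (\<forall>A\<in>G. \<forall>B\<in>G. A ** B \<in> G) \<and> (\<forall>A\<in>G. matrix_inv A \<in> G) \<and>
     closedin (top_of_set {A. invertible A}) G"

definition lie_algebra :: "(real^'m^'m) set \<Rightarrow> (real^'m^'m) set" where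
  "lie_algebra G = {A. \<forall>t::real. mexp (t *\<^sub>R A) \<in> G}"

definition wedge_map :: "(real^'m^'m) set \<Rightarrow> (real^'n \<Rightarrow> real^'m^'m) \<Rightarrow> bool" where
  "wedge_map G W \<longleftrightarrow> linear W \<and> inj W \<and> range W = lie_algebra G"

definition vee :: "(real^'n \<Rightarrow> real^'m^'m) \<Rightarrow> real^'m^'m \<Rightarrow> real^'n" where
  "vee W A = inv W A"

definition ad_mat :: "(real^'n \<Rightarrow> real^'m^'m) \<Rightarrow> real^'n \<Rightarrow> real^'n^'n" where
  "ad_mat W z = matrix (\<lambda>y. vee W (W z ** W y - W y ** W z))"

definition Ad_mat :: "(real^'n \<Rightarrow> real^'m^'m) \<Rightarrow> real^'m^'m \<Rightarrow> real^'n^'n" where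
  "Ad_mat W X = matrix (\<lambda>y. vee W (X ** W y ** matrix_inv X))"

text \<open>(I - exp(-ad))/ad = sum_k (-1)^k/(k+1)! ad^k.\<close>

definition dexp_series :: "(real^'n \<Rightarrow> real^'m^'m) \<Rightarrow> real^'n \<Rightarrow> real^'n^'n" where
  "dexp_series W z = (\<Sum>k. ((-1) ^ k / fact (k + 1)) *\<^sub>R mpow (ad_mat W z) k)"

text \<open>U_l = - ad exp(-ad)/(I - exp(-ad)) = - exp(-ad) (ad/(I-exp(-ad))),
  where ad/(I-exp(-ad)) is the inverse of dexp_series.\<close>

definition U_mat :: "(real^'n \<Rightarrow> real^'m^'m) \<Rightarrow> real^'n \<Rightarrow> real^'n^'n" where
  "U_mat W z = - (mexp (- ad_mat W z) ** matrix_inv (dexp_series W z))"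

end

theory Submission
  imports Defs
begin

typedef (overloaded) 'a op = "UNIV :: ('a::euclidean_space \<Rightarrow>\<^sub>L 'a) set" morphisms Rep_op Abs_op by auto

lemmas op_simps = Rep_op_inverse Abs_op_inverse[OF UNIV_I] Rep_op_inject[symmetric]

instantiation op :: (euclidean_space) real_normed_algebra_1
begin
definition "0 = Abs_op 0"
definition "a + b = Abs_op (Rep_op a + Rep_op b)"
definition "a - b = Abs_op (Rep_op a - Rep_op b)"
definition "- a = Abs_op (- Rep_op a)"
definition "r *\<^sub>R a = Abs_op (r *\<^sub>R Rep_op a)"
definition "a * b = Abs_op (Rep_op a o\<^sub>L Rep_op b)"
definition "1 = Abs_op id_blinfun"
definition "norm a = norm (Rep_op a)"
definition "dist a b = norm (a - (b::'a op))"
definition "sgn a = inverse (norm a) *\<^sub>R (a::'a op)"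
definition "uniformity = (INF e\<in>{0<..}. principal {(x, y::'a op). dist x y < e})"
definition "open U = (\<forall>x\<in>U. \<forall>\<^sub>F (x', y) in uniformity. x' = x \<longrightarrow> y \<in> (U::'a op set))"

lemma Rep_ops: "Rep_op 0 = 0" "Rep_op (a+b) = Rep_op a + Rep_op b" "Rep_op (a-b) = Rep_op a - Rep_op b"
  "Rep_op (-a) = - Rep_op a" "Rep_op (r *\<^sub>R a) = r *\<^sub>R Rep_op a" "Rep_op (a*b) = Rep_op a o\<^sub>L Rep_op b"
  "Rep_op 1 = id_blinfun"
  by (simp_all add: zero_op_def plus_op_def minus_op_def uminus_op_def scaleR_op_def times_op_def one_op_def op_simps)

lemma dist_op_Rep: "dist a b = dist (Rep_op a) (Rep_op b)"
  by (simp add: dist_op_def norm_op_def Rep_ops dist_norm)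

lemma id_blinfun_nz: "(id_blinfun :: 'a::euclidean_space \<Rightarrow>\<^sub>L 'a) \<noteq> 0"
proof
  assume h: "(id_blinfun :: 'a \<Rightarrow>\<^sub>L 'a) = 0"
  obtain b :: 'a where b: "b \<in> Basis" using nonempty_Basis by blast
  have "blinfun_apply (id_blinfun :: 'a \<Rightarrow>\<^sub>L 'a) b = 0" by (simp add: h)
  thus False using b nonzero_Basis by auto
qed

instance proof
qed (auto simp: Rep_op_inject[symmetric] Rep_ops norm_op_def dist_op_def sgn_op_def uniformity_op_def open_op_def
   algebra_simps norm_triangle_ineq norm_blinfun_compose blinfun.bilinear_simps id_blinfun_nz intro!: blinfun_eqI
)
end

instance op :: (euclidean_space) banach
proof
  show "Cauchy X \<Longrightarrow> convergent X" for X :: "nat \<Rightarrow> 'a op"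
  proof -
    assume "Cauchy X"
    hence "Cauchy (\<lambda>n. Rep_op (X n))" unfolding Cauchy_def dist_op_Rep .
    then obtain L where "(\<lambda>n. Rep_op (X n)) \<longlonglongrightarrow> L" using convergent_def Cauchy_convergent_iff by blast
    hence "X \<longlonglongrightarrow> Abs_op L"
      unfolding lim_sequentially dist_op_Rep by (simp add: op_simps)
    thus ?thesis by (auto simp: convergent_def)
  qed
qed

lemma Rep_op_ops: "Rep_op 0 = 0" "Rep_op (a+b) = Rep_op a + Rep_op b" "Rep_op (a-b) = Rep_op a - Rep_op b"
  "Rep_op (-a) = - Rep_op a" "Rep_op (r *\<^sub>R a) = r *\<^sub>R Rep_op a" "Rep_op (a*b) = Rep_op a o\<^sub>L Rep_op b"
  "Rep_op 1 = id_blinfun" "norm a = norm (Rep_op a)"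
  by (simp_all add: Rep_ops norm_op_def)

definition toop :: "real^'m^'m \<Rightarrow> (real^'m) op" where
  "toop A = Abs_op (Blinfun (\<lambda>x. A *v x))"

definition ofop :: "(real^'m) op \<Rightarrow> real^'m^'m" where
  "ofop T = matrix (blinfun_apply (Rep_op T))"

lemma bl_mv: "bounded_linear (\<lambda>x. (A::real^'m^'m) *v x)"
  by (rule linear_conv_bounded_linear[THEN iffD1, OF matrix_vector_mul_linear])

lemma Rep_toop: "blinfun_apply (Rep_op (toop A)) = (\<lambda>x. A *v x)"
  by (simp add: toop_def op_simps bounded_linear_Blinfun_apply bl_mv)

lemma ofop_toop[simp]: "ofop (toop A) = A"
  by (simp add: ofop_def Rep_toop)

lemma toop_ofop[simp]: "toop (ofop T) = T"
proof -
  have "Blinfun (\<lambda>x. matrix (blinfun_apply (Rep_op T)) *v x) = Rep_op T"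
    by (simp add: matrix_works bounded_linear.linear[OF blinfun.bounded_linear_right] Rep_op_inverse blinfun_apply_inverse)
  thus ?thesis by (simp add: toop_def ofop_def Rep_op_inverse)
qed

lemma toop_eq_iff: "toop A = toop B \<longleftrightarrow> A = B"
  by (metis ofop_toop)

lemma toop_mult: "toop (A ** B) = toop A * toop B"
  by (simp add: Rep_op_inject[symmetric] Rep_op_ops Rep_toop blinfun_apply_inject[symmetric] fun_eq_iff matrix_vector_mul_assoc)

lemma toop_one: "toop (mat 1) = 1"
  by (simp add: Rep_op_inject[symmetric] Rep_op_ops Rep_toop blinfun_apply_inject[symmetric] fun_eq_iff)

lemma linear_toop: "linear toop"
  by (rule linearI) (simp_all add: Rep_op_inject[symmetric] Rep_op_ops Rep_toop blinfun_apply_inject[symmetric] fun_eq_iff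
      matrix_vector_mult_add_rdistrib scaleR_matrix_vector_assoc blinfun.bilinear_simps)

lemma bounded_linear_toop: "bounded_linear toop"
  by (rule linear_conv_bounded_linear[THEN iffD1, OF linear_toop])

lemma ofop_entry: "ofop T $ i $ j = Rep_op T (axis j 1) $ i"
  by (simp add: ofop_def matrix_def)

lemma linear_ofop: "linear ofop"
  by (rule linearI) (simp_all add: vec_eq_iff ofop_entry Rep_op_ops blinfun.bilinear_simps)

lemma norm_ofop: "norm (ofop (T::(real^'m) op)) \<le> norm T * (real CARD('m) * real CARD('m))"
proof -
  have e: "\<bar>ofop T $ i $ j\<bar> \<le> norm T" for i j
  proof -
    have "\<bar>ofop T $ i $ j\<bar> \<le> norm (Rep_op T (axis j 1))"
      unfolding ofop_entry by (rule component_le_norm_cart)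
    also have "\<dots> \<le> norm (Rep_op T) * norm (axis j (1::real))" by (rule norm_blinfun)
    finally show ?thesis by (simp add: Rep_op_ops)
  qed
  have "norm (ofop T) \<le> (\<Sum>i\<in>UNIV. norm (ofop T $ i))"
    by (simp add: norm_vec_def L2_set_le_sum)
  also have "\<dots> \<le> (\<Sum>i\<in>(UNIV::'m set). \<Sum>j\<in>(UNIV::'m set). norm T)"
  proof (rule sum_mono)
    fix i show "norm (ofop T $ i) \<le> (\<Sum>j\<in>(UNIV::'m set). norm T)"
      by (rule order_trans[OF norm_le_l1_cart]) (rule sum_mono[OF e])
  qed
  finally show ?thesis by (simp add: mult_ac)
qed

lemma bounded_linear_ofop: "bounded_linear (ofop :: (real^'m) op \<Rightarrow> _)"
  by (rule bounded_linear_intro[of _ "real CARD('m) * real CARD('m)"])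
    (simp_all add: linear_ofop linear_add linear_scale norm_ofop)

lemma powser_deriv:
  fixes c :: "nat \<Rightarrow> 'a::banach"
  assumes cb: "\<And>k. norm (c k) \<le> C * K^k / fact k" and K: "K \<ge> 0"
  shows "((\<lambda>s. \<Sum>k. s^(Suc k) *\<^sub>R c k) has_vector_derivative
           (\<Sum>k. s0^k *\<^sub>R (real (Suc k) *\<^sub>R c k))) (at s0)"
proof -
  define R where "R = \<bar>s0\<bar> + 1"
  define S where "S = ball s0 1"
  have R: "R \<ge> 0" by (simp add: R_def)
  have xS: "x \<in> S \<Longrightarrow> \<bar>x\<bar> \<le> R" for x
    by (auto simp: S_def R_def dist_real_def)
  have C: "C \<ge> 0" using order_trans[OF norm_ge_zero cb[of 0]] by simp
  define t where "t k x = x^k *\<^sub>R (real (Suc k) *\<^sub>R c k)" for k and x :: real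
  define G where "G x = (\<Sum>k. t k x)" for x
  have tb: "norm (t k x) \<le> C * (2*R*K)^k / fact k" if "x \<in> S" for k x
  proof -
    have "norm (t k x) = \<bar>x\<bar>^k * (real (Suc k) * norm (c k))"
      by (simp add: t_def power_abs abs_mult)
    also have "\<dots> \<le> R^k * (2^k * (C * K^k / fact k))"
    proof -
      have "real (Suc k) \<le> 2^k"
        by (induction k) auto
      hence a: "real (Suc k) * norm (c k) \<le> 2 ^ k * (C * K ^ k / fact k)"
        by (intro mult_mono cb) (auto simp: C K)
      show ?thesis
        by (rule mult_mono[OF power_mono[OF xS[OF that]] a]) (auto simp: C K R)
    qed
    also have "\<dots> = C * (2*R*K)^k / fact k" by (simp add: power_mult_distrib)
    finally show ?thesis .
  qed
  have sm: "summable (\<lambda>k. C * (2*R*K)^k / fact k)"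
    using summable_mult[OF summable_exp[of "2*R*K"], of C]
    by (simp add: field_simps)
  have ul: "uniform_limit S (\<lambda>n x. \<Sum>i<n. t i x) G sequentially"
    unfolding G_def by (rule Weierstrass_m_test[OF tb sm])
  define f where "f k x = x^(Suc k) *\<^sub>R c k" for k and x :: real
  have fd: "(f n has_derivative (\<lambda>h. h *\<^sub>R t n x)) (at x within S)" for n x
  proof -
    have "((\<lambda>x. x^(Suc n) *\<^sub>R c n) has_vector_derivative
       (x^(Suc n) *\<^sub>R 0 + (real (Suc n) * x^n) *\<^sub>R c n)) (at x within S)"
      by (rule has_vector_derivative_scaleR[OF _ has_vector_derivative_const])
        (use DERIV_pow[of "Suc n" x S] in simp)
    thus ?thesis by (simp add: f_def[abs_def] t_def has_vector_derivative_def mult_ac)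
  qed
  have unif: "\<forall>\<^sub>F n in sequentially. \<forall>x\<in>S. \<forall>h. norm (sum (\<lambda>i. h *\<^sub>R t i x) {..<n} - h *\<^sub>R G x) \<le> e * norm h"
    if "e > 0" for e
  proof -
    from uniform_limitD[OF ul that] have "\<forall>\<^sub>F n in sequentially. \<forall>x\<in>S. dist (\<Sum>i<n. t i x) (G x) < e" .
    thus ?thesis
    proof eventually_elim
      case (elim n)
      show ?case
      proof (intro ballI allI)
        fix x h assume "x \<in> S"
        with elim have "norm ((\<Sum>i<n. t i x) - G x) \<le> e" by (auto simp: dist_norm less_imp_le)
        hence "\<bar>h\<bar> * norm ((\<Sum>i<n. t i x) - G x) \<le> \<bar>h\<bar> * e" by (simp add: mult_left_mono)
        moreover have "sum (\<lambda>i. h *\<^sub>R t i x) {..<n} - h *\<^sub>R G x = h *\<^sub>R ((\<Sum>i<n. t i x) - G x)"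
          by (simp add: scaleR_sum_right scaleR_diff_right)
        ultimately show "norm (sum (\<lambda>i. h *\<^sub>R t i x) {..<n} - h *\<^sub>R G x) \<le> e * norm h"
          by (simp add: mult_ac)
      qed
    qed
  qed
  have fsum: "summable (\<lambda>n. f n x)" for x
  proof (rule summable_comparison_test)
    show "\<exists>N. \<forall>n\<ge>N. norm (f n x) \<le> \<bar>x\<bar> * (C * (\<bar>x\<bar>*K)^n / fact n)"
    proof (intro exI allI impI)
      fix n
      have "norm (f n x) = \<bar>x\<bar> * (\<bar>x\<bar>^n * norm (c n))" by (simp add: f_def power_abs abs_mult)
      also have "\<dots> \<le> \<bar>x\<bar> * (\<bar>x\<bar>^n * (C * K^n / fact n))"
        by (intro mult_left_mono cb) auto
      finally show "norm (f n x) \<le> \<bar>x\<bar> * (C * (\<bar>x\<bar>*K)^n / fact n)" by (simp add: power_mult_distrib mult_ac)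
    qed
    show "summable (\<lambda>n. \<bar>x\<bar> * (C * (\<bar>x\<bar>*K)^n / fact n))"
      using summable_mult[OF summable_exp[of "\<bar>x\<bar>*K"], of "\<bar>x\<bar>*C"]
      by (simp add: field_simps)
  qed
  have s0S: "s0 \<in> S" by (simp add: S_def)
  obtain g where g: "\<forall>x\<in>S. (\<lambda>n. f n x) sums g x \<and> (g has_derivative (\<lambda>h. h *\<^sub>R G x)) (at x within S)"
    using has_derivative_series[of S f "\<lambda>n x h. h *\<^sub>R t n x" "\<lambda>x h. h *\<^sub>R G x", OF _ fd unif s0S
       summable_sums[OF fsum[of s0]]] by (auto simp: S_def)
  have "(g has_derivative (\<lambda>h. h *\<^sub>R G s0)) (at s0)"
    using g s0S at_within_open[of s0 S] by (metis open_ball S_def)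
  hence "((\<lambda>s. \<Sum>k. f k s) has_derivative (\<lambda>h. h *\<^sub>R G s0)) (at s0)"
    by (rule has_derivative_transform_within_open[where s=S])
      (use g s0S in \<open>auto simp: S_def sums_iff\<close>)
  thus ?thesis by (simp add: has_vector_derivative_def f_def G_def t_def)
qed


lemma mvt_vec:
  fixes f :: "real \<Rightarrow> 'b::real_normed_vector"
  assumes d: "\<And>x. x \<in> {a..b} \<Longrightarrow> (f has_vector_derivative f' x) (at x within {a..b})"
    and B: "\<And>x. x \<in> {a..b} \<Longrightarrow> norm (f' x) \<le> B" and ab: "a \<le> b"
  shows "norm (f b - f a) \<le> B * (b - a)"
proof -
  have "norm (f b - f a) \<le> B * norm (b - a)"
  proof (rule differentiable_bound[of "{a..b}" f "\<lambda>x h. h *\<^sub>R f' x"])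
    show "\<And>x. x \<in> {a..b} \<Longrightarrow> (f has_derivative (\<lambda>h. h *\<^sub>R f' x)) (at x within {a..b})"
      using d by (simp add: has_vector_derivative_def)
    show "onorm (\<lambda>h. h *\<^sub>R f' x) \<le> B" if "x \<in> {a..b}" for x
    proof (rule onorm_le)
      fix h :: real
      have "norm (h *\<^sub>R f' x) = \<bar>h\<bar> * norm (f' x)" by simp
      also have "\<dots> \<le> \<bar>h\<bar> * B" by (rule mult_left_mono[OF B[OF that]]) simp
      finally show "norm (h *\<^sub>R f' x) \<le> B * norm h" by (simp add: mult_ac)
    qed
  qed (use ab in auto)
  thus ?thesis using ab by simp
qed

lemma bl_suminf:
  fixes c :: "nat \<Rightarrow> 'a::real_normed_vector \<Rightarrow> 'b::banach"
  assumes bl: "\<And>k. bounded_linear (c k)"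
    and nb: "\<And>k x. norm (c k x) \<le> M k * norm x" and sM: "summable M"
  shows "bounded_linear (\<lambda>x. \<Sum>k. c k x)"
proof -
  have sn: "summable (\<lambda>k. norm (c k x))" for x
    by (rule summable_comparison_test[of _ "\<lambda>k. M k * norm x"])
       (use nb sM summable_mult2 in auto)
  have s: "summable (\<lambda>k. c k x)" for x by (rule summable_norm_cancel[OF sn])
  show ?thesis
  proof (rule bounded_linear_intro[of _ "\<Sum>k. M k"])
    show "(\<Sum>k. c k (x + y)) = (\<Sum>k. c k x) + (\<Sum>k. c k y)" for x y
      by (simp add: linear_add[OF bounded_linear.linear[OF bl]] suminf_add[OF s s])
    show "(\<Sum>k. c k (r *\<^sub>R x)) = r *\<^sub>R (\<Sum>k. c k x)" for r x
      by (simp add: linear_scale[OF bounded_linear.linear[OF bl]] suminf_scaleR_right[OF s])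
    show "norm (\<Sum>k. c k x) \<le> norm x * (\<Sum>k. M k)" for x
    proof -
      have "norm (\<Sum>k. c k x) \<le> (\<Sum>k. norm (c k x))" by (rule summable_norm[OF sn])
      also have "\<dots> \<le> (\<Sum>k. M k * norm x)"
        by (rule suminf_le[OF nb sn summable_mult2[OF sM]])
      also have "\<dots> = norm x * (\<Sum>k. M k)" using suminf_mult2[OF sM, of "norm x"] by (simp add: mult_ac)
      finally show ?thesis .
    qed
  qed
qed

definition adp :: "'a::real_normed_algebra \<Rightarrow> nat \<Rightarrow> 'a \<Rightarrow> 'a" where
  "adp A k = ((\<lambda>Y. A * Y - Y * A) ^^ k)"

lemma adp_0[simp]: "adp A 0 B = B" by (simp add: adp_def)
lemma adp_Suc: "adp A (Suc k) B = A * adp A k B - adp A k B * A" by (simp add: adp_def)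

lemma norm_adp: "norm (adp A k B) \<le> (2 * norm A)^k * norm B"
proof (induction k)
  case (Suc k)
  have "norm (adp A (Suc k) B) \<le> norm (A * adp A k B) + norm (adp A k B * A)"
    unfolding adp_Suc by (rule norm_triangle_ineq4)
  also have "\<dots> \<le> norm A * norm (adp A k B) + norm (adp A k B) * norm A"
    by (intro add_mono norm_mult_ineq)
  also have "\<dots> = 2 * norm A * norm (adp A k B)" by simp
  also have "\<dots> \<le> 2 * norm A * ((2 * norm A)^k * norm B)"
    by (rule mult_left_mono[OF Suc]) simp
  finally show ?case by (simp add: mult_ac)
qed simp

lemma bl_adp: "bounded_linear (adp A k)"
proof (induction k)
  case 0 show ?case by (simp add: adp_def bounded_linear_ident[unfolded id_def])
next
  case (Suc k)
  have "bounded_linear (\<lambda>B. A * adp A k B - adp A k B * A)"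
    by (intro bounded_linear_sub bounded_linear_compose[OF bounded_linear_mult_right Suc]
              bounded_linear_compose[OF bounded_linear_mult_left Suc])
  thus ?case by (simp add: adp_Suc[abs_def])
qed

definition adc :: "'a::real_normed_algebra \<Rightarrow> 'a \<Rightarrow> nat \<Rightarrow> 'a" where
  "adc A B k = ((-1)^k / fact k) *\<^sub>R adp A k B"

lemma norm_adc: "norm (adc A B k) \<le> norm B * (2 * norm A)^k / fact k"
proof -
  have "norm (adc A B k) = norm (adp A k B) / fact k" by (simp add: adc_def)
  also have "\<dots> \<le> (2 * norm A)^k * norm B / fact k"
    by (rule divide_right_mono[OF norm_adp]) simp
  finally show ?thesis by (simp add: mult_ac)
qed

lemma summable_exp_bound:
  fixes f :: "nat \<Rightarrow> 'a::banach"
  assumes "\<And>k. norm (f k) \<le> C * K^k / fact k"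
  shows "summable f" "summable (\<lambda>k. norm (f k))"
proof -
  have sm: "summable (\<lambda>k. C * K^k / fact k)"
    using summable_mult[OF summable_exp[of K], of C] by (simp add: field_simps)
  show "summable (\<lambda>k. norm (f k))"
    by (rule summable_comparison_test[OF _ sm]) (use assms in auto)
  thus "summable f" by (rule summable_norm_cancel)
qed

lemma norm_adc_s: "norm (s^k *\<^sub>R adc A B k) \<le> norm B * (\<bar>s\<bar> * (2 * norm A))^k / fact k"
proof -
  have "norm (s^k *\<^sub>R adc A B k) = \<bar>s\<bar>^k * norm (adc A B k)" by (simp add: power_abs)
  also have "\<dots> \<le> \<bar>s\<bar>^k * (norm B * (2 * norm A)^k / fact k)"
    by (rule mult_left_mono[OF norm_adc]) simp
  finally show ?thesis by (simp add: power_mult_distrib mult_ac)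
qed

lemma summable_adc: fixes A :: "'a::{real_normed_algebra,banach}" shows "summable (\<lambda>k. s^k *\<^sub>R adc A B k)"
  by (rule summable_exp_bound(1)[of "\<lambda>k. s^k *\<^sub>R adc A B k" "norm B" "\<bar>s\<bar> * (2 * norm A)", OF norm_adc_s])

lemma adc_Suc: "real (Suc k) *\<^sub>R adc A B (Suc k) = - (A * adc A B k - adc A B k * A)"
proof -
  have "real (Suc k) *\<^sub>R adc A B (Suc k) = ((-1)^Suc k / fact k) *\<^sub>R (A * adp A k B - adp A k B * A)"
  proof -
    have e: "real (Suc k) * ((-1)^Suc k / fact (Suc k)) = ((-1)^Suc k / fact k :: real)"
      by (simp add: fact_Suc field_simps del: of_nat_Suc)
    show ?thesis unfolding adc_def scaleR_scaleR e by (simp add: adp_Suc)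
  qed
  also have "\<dots> = - (A * adc A B k - adc A B k * A)"
    by (simp add: adc_def algebra_simps)
  finally show ?thesis .
qed

lemma Ad_series:
  fixes A B :: "'a::{real_normed_algebra_1,banach}"
  shows "exp (s *\<^sub>R (-A)) * B * exp (s *\<^sub>R A) = (\<Sum>k. s^k *\<^sub>R adc A B k)"
proof -
  define Y where "Y s = (\<Sum>k. s^k *\<^sub>R adc A B k)" for s :: real
  have Ysplit: "Y s = B + (\<Sum>k. s^(Suc k) *\<^sub>R adc A B (Suc k))" for s
    using suminf_split_head[OF summable_adc[of s A B]] by (simp add: Y_def adc_def)
  have Y0: "Y 0 = B" by (simp add: Ysplit)
  have dY: "(Y has_vector_derivative - (A * Y s - Y s * A)) (at s)" for s
  proof -
    have bnd: "norm (adc A B (Suc k)) \<le> (norm B * (2 * norm A)) * (2 * norm A)^k / fact k" for k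
    proof -
      have "norm (adc A B (Suc k)) \<le> norm B * (2 * norm A)^Suc k / fact (Suc k)" by (rule norm_adc)
      also have "\<dots> \<le> norm B * (2 * norm A)^Suc k / fact k"
        by (rule divide_left_mono) (auto simp: fact_mono)
      finally show ?thesis by (simp add: mult_ac)
    qed
    have d1: "((\<lambda>s. \<Sum>k. s^(Suc k) *\<^sub>R adc A B (Suc k)) has_vector_derivative
           (\<Sum>k. s^k *\<^sub>R (real (Suc k) *\<^sub>R adc A B (Suc k)))) (at s)"
      by (rule powser_deriv[OF bnd]) simp
    have "(\<Sum>k. s^k *\<^sub>R (real (Suc k) *\<^sub>R adc A B (Suc k)))
        = (\<Sum>k. - (A * (s^k *\<^sub>R adc A B k) - (s^k *\<^sub>R adc A B k) * A))"
      unfolding adc_Suc by (simp add: algebra_simps)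
    also have "\<dots> = - (\<Sum>k. A * (s^k *\<^sub>R adc A B k) - (s^k *\<^sub>R adc A B k) * A)"
      by (rule suminf_minus[OF summable_diff[OF summable_mult[OF summable_adc] summable_mult2[OF summable_adc]]])
    also have "(\<Sum>k. A * (s^k *\<^sub>R adc A B k) - (s^k *\<^sub>R adc A B k) * A) =
       (\<Sum>k. A * (s^k *\<^sub>R adc A B k)) - (\<Sum>k. (s^k *\<^sub>R adc A B k) * A)"
      by (rule suminf_diff[symmetric, OF summable_mult[OF summable_adc] summable_mult2[OF summable_adc]])
    also have "\<dots> = A * Y s - Y s * A"
      by (simp only: Y_def suminf_mult[OF summable_adc] suminf_mult2[OF summable_adc, symmetric])
    finally have "(\<Sum>k. s^k *\<^sub>R (real (Suc k) *\<^sub>R adc A B (Suc k))) = - (A * Y s - Y s * A)" .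
    with d1 have "((\<lambda>s. B + (\<Sum>k. s^(Suc k) *\<^sub>R adc A B (Suc k))) has_vector_derivative
           0 + - (A * Y s - Y s * A)) (at s)"
      by (intro derivative_intros) auto
    thus ?thesis by (simp add: Ysplit[abs_def])
  qed
  define Z where "Z s = exp (s *\<^sub>R A) * Y s * exp (s *\<^sub>R (-A))" for s
  have dZ: "(Z has_vector_derivative 0) (at s)" for s
  proof -
    have "(Z has_vector_derivative
       (exp (s *\<^sub>R A) * Y s * ((-A) * exp (s *\<^sub>R (-A))) +
        (exp (s *\<^sub>R A) * (- (A * Y s - Y s * A)) + (exp (s *\<^sub>R A) * A) * Y s) * exp (s *\<^sub>R (-A)))) (at s)"
      unfolding Z_def
      by (intro has_vector_derivative_mult exp_scaleR_has_vector_derivative_left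
            exp_scaleR_has_vector_derivative_right dY)
    thus ?thesis by (simp add: algebra_simps)
  qed
  have "\<exists>c. \<forall>x\<in>UNIV. Z x = c"
    by (rule has_derivative_zero_constant[of UNIV Z]) (use dZ in \<open>auto simp: has_vector_derivative_def\<close>)
  then obtain c where c: "\<And>x. Z x = c" by auto
  have Zs: "Z s = B" using c[of s] c[of 0] by (simp add: Z_def Y0)
  have "exp (s *\<^sub>R (-A)) * B * exp (s *\<^sub>R A) = exp (s *\<^sub>R (-A)) * Z s * exp (s *\<^sub>R A)" by (simp add: Zs)
  also have "\<dots> = (exp (s *\<^sub>R (-A)) * exp (s *\<^sub>R A)) * Y s * (exp (s *\<^sub>R (-A)) * exp (s *\<^sub>R A))"
    by (simp add: Z_def mult.assoc)
  also have "\<dots> = Y s"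
    using exp_minus_inverse[of "s *\<^sub>R (-A)"] by simp
  finally show ?thesis by (simp add: Y_def)
qed


definition qc :: "'a::real_normed_algebra \<Rightarrow> 'a \<Rightarrow> nat \<Rightarrow> 'a" where
  "qc A B k = ((-1)^k / fact (Suc k)) *\<^sub>R adp A k B"

lemma norm_qc: "norm (qc A B k) \<le> norm B * (2 * norm A)^k / fact k"
proof -
  have "norm (qc A B k) = norm (adp A k B) / fact (Suc k)" by (simp add: qc_def)
  also have "\<dots> \<le> norm (adp A k B) / fact k"
    by (rule divide_left_mono) (auto simp: fact_mono)
  also have "\<dots> \<le> (2 * norm A)^k * norm B / fact k"
    by (rule divide_right_mono[OF norm_adp]) simp
  finally show ?thesis by (simp add: mult_ac)
qed

lemma bl_Q: fixes A :: "'a::{real_normed_algebra,banach}" shows "bounded_linear (\<lambda>B. \<Sum>k. qc A B k)"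
proof (rule bl_suminf[of "\<lambda>k B. qc A B k" "\<lambda>k. (2 * norm A)^k / fact k"])
  show "bounded_linear (\<lambda>B. qc A B k)" for k
    unfolding qc_def by (rule bounded_linear_compose[OF bounded_linear_scaleR_right bl_adp])
  show "norm (qc A B k) \<le> (2 * norm A)^k / fact k * norm B" for k B
    using norm_qc[of A B k] by (simp add: mult_ac)
  show "summable (\<lambda>k. (2 * norm A)^k / fact k)"
    using summable_exp[of "2 * norm A"] by (simp add: field_simps)
qed

lemma P_deriv:
  fixes A B :: "'a::{real_normed_algebra_1,banach}"
  shows "((\<lambda>s. \<Sum>k. s^(Suc k) *\<^sub>R qc A B k) has_vector_derivative
           exp (s *\<^sub>R (-A)) * B * exp (s *\<^sub>R A)) (at s)"
proof -
  have "((\<lambda>s. \<Sum>k. s^(Suc k) *\<^sub>R qc A B k) has_vector_derivative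
           (\<Sum>k. s^k *\<^sub>R (real (Suc k) *\<^sub>R qc A B k))) (at s)"
    by (rule powser_deriv[OF norm_qc]) simp
  moreover have "real (Suc k) *\<^sub>R qc A B k = adc A B k" for k
  proof -
    have e: "real (Suc k) * ((-1)^k / fact (Suc k)) = ((-1)^k / fact k :: real)"
      by (simp add: fact_Suc field_simps del: of_nat_Suc)
    show ?thesis unfolding adc_def qc_def scaleR_scaleR e ..
  qed
  ultimately show ?thesis by (simp only: Ad_series)
qed

lemma norm_exp_scaleR_le:
  fixes X :: "'a::{real_normed_algebra_1,banach}"
  assumes "s \<in> {0..1}" shows "norm (exp (s *\<^sub>R X)) \<le> exp (norm X)"
proof -
  have "norm (exp (s *\<^sub>R X)) \<le> exp (norm (s *\<^sub>R X))" by (rule norm_exp)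
  also have "norm (s *\<^sub>R X) \<le> norm X"
    using assms by (simp add: mult_left_le_one_le)
  hence "exp (norm (s *\<^sub>R X)) \<le> exp (norm X)" by simp
  finally show ?thesis .
qed

lemma exp_frechet_bound:
  fixes A B :: "'a::{real_normed_algebra_1,banach}"
  assumes B1: "norm B \<le> 1"
  shows "norm (exp (A + B) - exp A - exp A * (\<Sum>k. qc A B k))
     \<le> exp (norm A) * (exp (norm A) * (exp (norm A) * (exp (norm A) * exp (norm A + 1)))) * norm B ^ 2"
proof -
  define a where "a = norm A"
  define C1 where "C1 = exp a * exp (a + 1)"
  have C1: "C1 \<ge> 0" by (simp add: C1_def)
  define k where "k s = exp (s *\<^sub>R (-A)) * exp (s *\<^sub>R (A + B))" for s :: real
  have kd: "(k has_vector_derivative exp (s *\<^sub>R (-A)) * B * exp (s *\<^sub>R (A + B))) (at s within T)" for s T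
  proof -
    have "(k has_vector_derivative
       exp (s *\<^sub>R (-A)) * ((A + B) * exp (s *\<^sub>R (A + B))) + exp (s *\<^sub>R (-A)) * (-A) * exp (s *\<^sub>R (A + B))) (at s within T)"
      unfolding k_def
      by (intro has_vector_derivative_mult exp_scaleR_has_vector_derivative_right
            has_vector_derivative_at_within[OF exp_scaleR_has_vector_derivative_left])
    thus ?thesis by (simp add: algebra_simps)
  qed
  have nAB: "norm (A + B) \<le> a + 1"
    using norm_triangle_ineq[of A B] B1 by (simp add: a_def)
  have kdb: "norm (exp (s *\<^sub>R (-A)) * B * exp (s *\<^sub>R (A + B))) \<le> C1 * norm B" if "s \<in> {0..1}" for s
  proof -
    have "norm (exp (s *\<^sub>R (-A)) * B * exp (s *\<^sub>R (A + B)))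
        \<le> norm (exp (s *\<^sub>R (-A))) * norm B * norm (exp (s *\<^sub>R (A + B)))"
      by (rule order_trans[OF norm_mult_ineq mult_right_mono[OF norm_mult_ineq norm_ge_zero]])
    also have "\<dots> \<le> exp a * norm B * exp (a + 1)"
    proof (intro mult_mono)
      show "norm (exp (s *\<^sub>R (-A))) \<le> exp a"
        using norm_exp_scaleR_le[OF that, of "-A"] by (simp add: a_def)
      show "norm (exp (s *\<^sub>R (A + B))) \<le> exp (a + 1)"
        using norm_exp_scaleR_le[OF that, of "A + B"] nAB by (meson exp_le_cancel_iff order_trans)
    qed auto
    finally show ?thesis by (simp add: C1_def mult_ac)
  qed
  have k0: "k 0 = 1" by (simp add: k_def)
  have kb: "norm (k s - 1) \<le> C1 * norm B" if "s \<in> {0..1}" for s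
  proof -
    have "norm (k s - k 0) \<le> (C1 * norm B) * (s - 0)"
      by (rule mvt_vec[OF kd]) (use kdb that in auto)
    also have "\<dots> \<le> C1 * norm B" using that C1 by (simp add: mult_left_le)
    finally show ?thesis by (simp add: k0)
  qed
  have eb: "norm (exp (s *\<^sub>R (A + B)) - exp (s *\<^sub>R A)) \<le> exp a * (C1 * norm B)" if "s \<in> {0..1}" for s
  proof -
    have "exp (s *\<^sub>R A) * k s = exp (s *\<^sub>R (A + B))"
      using exp_minus_inverse[of "s *\<^sub>R A"] by (simp add: k_def mult.assoc[symmetric])
    hence "exp (s *\<^sub>R (A + B)) - exp (s *\<^sub>R A) = exp (s *\<^sub>R A) * (k s - 1)"
      by (simp add: right_diff_distrib)
    also have "norm \<dots> \<le> norm (exp (s *\<^sub>R A)) * norm (k s - 1)" by (rule norm_mult_ineq)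
    also have "\<dots> \<le> exp a * (C1 * norm B)"
      by (intro mult_mono kb that) (use norm_exp_scaleR_le[OF that, of A] in \<open>auto simp: a_def\<close>)
    finally show ?thesis .
  qed
  define P where "P s = (\<Sum>k. s^(Suc k) *\<^sub>R qc A B k)" for s :: real
  define h where "h s = k s - 1 - P s" for s
  have hd: "(h has_vector_derivative exp (s *\<^sub>R (-A)) * B * (exp (s *\<^sub>R (A + B)) - exp (s *\<^sub>R A))) (at s within T)" for s T
  proof -
    have "(h has_vector_derivative exp (s *\<^sub>R (-A)) * B * exp (s *\<^sub>R (A + B)) - 0 - exp (s *\<^sub>R (-A)) * B * exp (s *\<^sub>R A)) (at s within T)"
      unfolding h_def P_def
      by (intro has_vector_derivative_diff kd has_vector_derivative_const
            has_vector_derivative_at_within[OF P_deriv])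
    thus ?thesis by (simp add: algebra_simps)
  qed
  have hdb: "norm (exp (s *\<^sub>R (-A)) * B * (exp (s *\<^sub>R (A + B)) - exp (s *\<^sub>R A)))
     \<le> exp a * (exp a * (C1 * norm B)) * norm B" if "s \<in> {0..1}" for s
  proof -
    have "norm (exp (s *\<^sub>R (-A)) * B * (exp (s *\<^sub>R (A + B)) - exp (s *\<^sub>R A)))
        \<le> norm (exp (s *\<^sub>R (-A))) * norm B * norm (exp (s *\<^sub>R (A + B)) - exp (s *\<^sub>R A))"
      by (rule order_trans[OF norm_mult_ineq mult_right_mono[OF norm_mult_ineq norm_ge_zero]])
    also have "\<dots> \<le> exp a * norm B * (exp a * (C1 * norm B))"
    proof (intro mult_mono eb that)
      show "norm (exp (s *\<^sub>R (-A))) \<le> exp a"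
        using norm_exp_scaleR_le[OF that, of "-A"] by (simp add: a_def)
    qed (auto simp: C1)
    finally show ?thesis by (simp add: mult_ac)
  qed
  have h0: "h 0 = 0" by (simp add: h_def k0 P_def)
  have "norm (h 1 - h 0) \<le> (exp a * (exp a * (C1 * norm B)) * norm B) * (1 - 0)"
    by (rule mvt_vec[OF hd hdb]) auto
  hence hb: "norm (h 1) \<le> exp a * (exp a * C1) * norm B ^ 2" by (simp add: h0 power2_eq_square mult_ac)
  have "exp (A + B) - exp A - exp A * (\<Sum>k. qc A B k) = exp A * h 1"
  proof -
    have "exp A * k 1 = exp (A + B)"
      using exp_minus_inverse[of A] by (simp add: k_def mult.assoc[symmetric])
    thus ?thesis by (simp add: h_def P_def algebra_simps)
  qed
  hence "norm (exp (A + B) - exp A - exp A * (\<Sum>k. qc A B k)) \<le> norm (exp A) * norm (h 1)"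
    by (simp add: norm_mult_ineq)
  also have "\<dots> \<le> exp a * (exp a * (exp a * C1) * norm B ^ 2)"
    by (intro mult_mono hb) (auto simp: a_def norm_exp)
  finally show ?thesis by (simp add: C1_def a_def mult_ac)
qed


lemma exp_frechet:
  fixes A :: "'a::{real_normed_algebra_1,banach}"
  shows "(exp has_derivative (\<lambda>B. exp A * (\<Sum>k. qc A B k))) (at A)"
  unfolding has_derivative_at_alt
proof (intro conjI allI impI)
  show "bounded_linear (\<lambda>B. exp A * (\<Sum>k. qc A B k))"
    by (rule bounded_linear_compose[OF bounded_linear_mult_right bl_Q])
  fix e :: real assume e: "e > 0"
  define K where "K = exp (norm A) * (exp (norm A) * (exp (norm A) * (exp (norm A) * exp (norm A + 1))))"
  have K: "K \<ge> 0" by (simp add: K_def)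
  define d where "d = min 1 (e / (K + 1))"
  have d: "d > 0" using e K by (simp add: d_def)
  show "\<exists>d>0. \<forall>y. norm (y - A) < d \<longrightarrow>
      norm (exp y - exp A - exp A * (\<Sum>k. qc A (y - A) k)) \<le> e * norm (y - A)"
  proof (intro exI conjI allI impI, fact d)
    fix y assume y: "norm (y - A) < d"
    define B where "B = y - A"
    have B1: "norm B \<le> 1" using y by (simp add: B_def d_def)
    have "norm (exp y - exp A - exp A * (\<Sum>k. qc A (y - A) k)) \<le> K * norm B ^ 2"
      using exp_frechet_bound[OF B1, of A] by (simp add: B_def K_def)
    also have "\<dots> = (K * norm B) * norm B" by (simp add: power2_eq_square)
    also have "\<dots> \<le> e * norm B"
    proof (rule mult_right_mono)
      have "norm B \<le> e / (K + 1)" using y by (simp add: B_def d_def)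
      hence "K * norm B \<le> K * (e / (K + 1))" using K using mult_left_mono[of "norm B" "e / (K + 1)" K] by simp
      also have "\<dots> \<le> e" using K e by (simp add: field_simps)
      finally show "K * norm B \<le> e" .
    qed simp
    finally show "norm (exp y - exp A - exp A * (\<Sum>k. qc A (y - A) k)) \<le> e * norm (y - A)"
      by (simp add: B_def)
  qed
qed

definition phi :: "'a::{real_normed_algebra_1,banach} \<Rightarrow> 'a" where
  "phi x = (\<Sum>k. (1 / fact (Suc k)) *\<^sub>R x^k)"

lemma norm_phi_term: "norm ((1 / fact (Suc k)) *\<^sub>R x^k) \<le> 1 * norm x^k / fact k"
  for x :: "'a::{real_normed_algebra_1,banach}"
proof -
  have "norm ((1 / fact (Suc k)) *\<^sub>R x^k) = norm (x^k) / fact (Suc k)" by simp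
  also have "\<dots> \<le> norm (x^k) / fact k" by (rule divide_left_mono) (auto simp: fact_mono)
  also have "\<dots> \<le> norm x^k / fact k" by (rule divide_right_mono[OF norm_power_ineq]) simp
  finally show ?thesis by simp
qed

lemma summable_phi: "summable (\<lambda>k. (1 / fact (Suc k)) *\<^sub>R (x::'a::{real_normed_algebra_1,banach})^k)"
  by (rule summable_exp_bound(1)[OF norm_phi_term])

lemma commute_phi: assumes "x * y = y * x" shows "phi x * y = y * phi x"
proof -
  have "phi x * y = (\<Sum>k. ((1 / fact (Suc k)) *\<^sub>R x^k) * y)"
    unfolding phi_def by (rule suminf_mult2[OF summable_phi])
  also have "\<dots> = (\<Sum>k. y * ((1 / fact (Suc k)) *\<^sub>R x^k))"
    by (simp only: mult_scaleR_left mult_scaleR_right power_commuting_commutes[OF assms])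
  also have "\<dots> = y * phi x"
    unfolding phi_def by (rule suminf_mult[OF summable_phi])
  finally show ?thesis .
qed

lemma x_phi: "x * phi x = exp x - 1"
proof -
  have "x * phi x = (\<Sum>k. x * ((1 / fact (Suc k)) *\<^sub>R x^k))"
    unfolding phi_def by (rule suminf_mult[OF summable_phi, symmetric])
  also have "\<dots> = (\<Sum>k. x^(Suc k) /\<^sub>R fact (Suc k))"
  proof -
    have "x * ((1 / fact (Suc k)) *\<^sub>R x^k) = x^(Suc k) /\<^sub>R fact (Suc k)" for k
      by (simp only: mult_scaleR_right power_Suc) (simp add: divide_inverse)
    thus ?thesis by (simp only:)
  qed
  also have "\<dots> = exp x - 1"
    using suminf_split_head[OF summable_exp_generic[of x]] by (simp add: exp_def)
  finally show ?thesis .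
qed

lemma phi_x: "phi x * x = exp x - 1"
  using x_phi[of x] commute_phi[of x x] by simp

lemma sphi_deriv:
  fixes y :: "'a::{real_normed_algebra_1,banach}"
  shows "((\<lambda>s. s *\<^sub>R phi (s *\<^sub>R y)) has_vector_derivative exp (s *\<^sub>R y)) (at s)"
proof -
  have eq: "s *\<^sub>R phi (s *\<^sub>R y) = (\<Sum>k. s^(Suc k) *\<^sub>R ((1 / fact (Suc k)) *\<^sub>R y^k))" for s
  proof -
    have t: "s *\<^sub>R ((1 / fact (Suc k)) *\<^sub>R (s *\<^sub>R y)^k) = s^(Suc k) *\<^sub>R ((1 / fact (Suc k)) *\<^sub>R y^k)" for k
      by (simp only: scaleR_power scaleR_scaleR power_Suc mult.assoc mult.commute mult.left_commute)
    have "s *\<^sub>R phi (s *\<^sub>R y) = (\<Sum>k. s *\<^sub>R ((1 / fact (Suc k)) *\<^sub>R (s *\<^sub>R y)^k))"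
      unfolding phi_def by (rule suminf_scaleR_right[OF summable_phi])
    also have "\<dots> = (\<Sum>k. s^(Suc k) *\<^sub>R ((1 / fact (Suc k)) *\<^sub>R y^k))"
      by (simp only: t)
    finally show ?thesis by (simp only:)
  qed
  have "((\<lambda>s. \<Sum>k. s^(Suc k) *\<^sub>R ((1 / fact (Suc k)) *\<^sub>R y^k)) has_vector_derivative
           (\<Sum>k. s^k *\<^sub>R (real (Suc k) *\<^sub>R ((1 / fact (Suc k)) *\<^sub>R y^k)))) (at s)"
    by (rule powser_deriv[OF norm_phi_term]) simp
  moreover have "(\<Sum>k. s^k *\<^sub>R (real (Suc k) *\<^sub>R ((1 / fact (Suc k)) *\<^sub>R y^k))) = exp (s *\<^sub>R y)"
  proof -
    have "s^k *\<^sub>R (real (Suc k) *\<^sub>R ((1 / fact (Suc k)) *\<^sub>R y^k)) = (s *\<^sub>R y)^k /\<^sub>R fact k" for k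
      by (simp add: fact_Suc field_simps del: of_nat_Suc)
    thus ?thesis by (simp only: exp_def)
  qed
  ultimately show ?thesis by (simp add: eq)
qed

lemma phi_neg_exp: "phi (-x) * exp x = phi (x::'a::{real_normed_algebra_1,banach})"
proof -
  define F where "F s = s *\<^sub>R phi (s *\<^sub>R (-x)) * exp (s *\<^sub>R x) - s *\<^sub>R phi (s *\<^sub>R x)" for s
  have dF: "(F has_vector_derivative 0) (at s)" for s
  proof -
    have "(F has_vector_derivative
       (s *\<^sub>R phi (s *\<^sub>R (-x)) * (exp (s *\<^sub>R x) * x) + exp (s *\<^sub>R (-x)) * exp (s *\<^sub>R x))
        - exp (s *\<^sub>R x)) (at s)"
      unfolding F_def
      by (intro has_vector_derivative_diff has_vector_derivative_mult sphi_deriv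
           exp_scaleR_has_vector_derivative_right)
    moreover have "s *\<^sub>R phi (s *\<^sub>R (-x)) * (exp (s *\<^sub>R x) * x) + exp (s *\<^sub>R (-x)) * exp (s *\<^sub>R x)
        - exp (s *\<^sub>R x) = 0"
    proof -
      have c: "phi (s *\<^sub>R (-x)) * x = x * phi (s *\<^sub>R (-x))"
        by (rule commute_phi) (simp add: algebra_simps)
      have c2: "exp (s *\<^sub>R x) * x = x * exp (s *\<^sub>R x)" by (rule exp_times_scaleR_commute)
      have 1: "s *\<^sub>R phi (s *\<^sub>R (-x)) * (exp (s *\<^sub>R x) * x) = ((s *\<^sub>R x) * phi (s *\<^sub>R (-x))) * exp (s *\<^sub>R x)"
      proof -
        have "s *\<^sub>R phi (s *\<^sub>R (-x)) * (exp (s *\<^sub>R x) * x) = s *\<^sub>R (phi (s *\<^sub>R (-x)) * (x * exp (s *\<^sub>R x)))"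
          by (simp only: c2 mult_scaleR_left)
        also have "\<dots> = s *\<^sub>R ((x * phi (s *\<^sub>R (-x))) * exp (s *\<^sub>R x))"
          by (simp only: mult.assoc[symmetric] c)
        also have "\<dots> = ((s *\<^sub>R x) * phi (s *\<^sub>R (-x))) * exp (s *\<^sub>R x)"
          by (simp only: mult_scaleR_left)
        finally show ?thesis .
      qed
      have 2: "(s *\<^sub>R x) * phi (s *\<^sub>R (-x)) = 1 - exp (s *\<^sub>R (-x))"
      proof -
        have "(s *\<^sub>R (-x)) * phi (s *\<^sub>R (-x)) = exp (s *\<^sub>R (-x)) - 1" by (rule x_phi)
        hence "- ((s *\<^sub>R x) * phi (s *\<^sub>R (-x))) = exp (s *\<^sub>R (-x)) - 1" by simp
        thus ?thesis by (simp add: algebra_simps)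
      qed
      have 3: "exp (s *\<^sub>R (-x)) * exp (s *\<^sub>R x) = 1"
        using exp_minus_inverse[of "- (s *\<^sub>R x)"] by simp
      show ?thesis unfolding 1 2 using 3 by (simp add: left_diff_distrib)
    qed
    ultimately show ?thesis by simp
  qed
  have "\<exists>c. \<forall>s\<in>UNIV. F s = c"
    by (rule has_derivative_zero_constant[of UNIV F]) (use dF in \<open>auto simp: has_vector_derivative_def\<close>)
  then obtain c where "\<And>s. F s = c" by auto
  hence "F 1 = F 0" by metis
  thus ?thesis by (simp add: F_def)
qed

lemma mpow_0[simp]: "mpow A 0 = mat 1" by (simp add: mpow_def)
lemma mpow_Suc: "mpow A (Suc k) = A ** mpow A k" by (simp add: mpow_def)

lemma toop_mpow: "toop (mpow A k) = toop A ^ k"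
  by (induction k) (simp_all add: mpow_Suc toop_mult toop_one)

lemma toop_scaleR: "toop (r *\<^sub>R A) = r *\<^sub>R toop A"
  by (rule linear_scale[OF linear_toop])
lemma toop_add: "toop (A + B) = toop A + toop B"
  by (rule linear_add[OF linear_toop])
lemma toop_diff: "toop (A - B) = toop A - toop B"
  by (rule linear_diff[OF linear_toop])
lemma toop_neg: "toop (- A) = - toop A"
  by (rule linear_neg[OF linear_toop])

lemma toop_suminf:
  assumes "summable (\<lambda>k. toop (f k))"
  shows "summable f" "toop (suminf f) = (\<Sum>k. toop (f k))"
proof -
  have "summable (\<lambda>k. ofop (toop (f k)))"
    by (rule bounded_linear.summable[OF bounded_linear_ofop assms])
  thus "summable f" by simp
  have "ofop (\<Sum>k. toop (f k)) = (\<Sum>k. ofop (toop (f k)))"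
    by (rule bounded_linear.suminf[OF bounded_linear_ofop assms])
  hence "ofop (\<Sum>k. toop (f k)) = suminf f" by simp
  hence "toop (suminf f) = toop (ofop (\<Sum>k. toop (f k)))" by simp
  thus "toop (suminf f) = (\<Sum>k. toop (f k))" by simp
qed

lemma toop_mexp: "toop (mexp A) = exp (toop A)"
proof -
  have t: "toop ((1 / fact k) *\<^sub>R mpow A k) = toop A ^ k /\<^sub>R fact k" for k
    by (simp only: toop_scaleR toop_mpow inverse_eq_divide)
  have "summable (\<lambda>k. toop ((1 / fact k) *\<^sub>R mpow A k))"
    unfolding t by (rule summable_exp_generic)
  from toop_suminf(2)[OF this] show ?thesis by (simp only: mexp_def t exp_def)
qed

lemma mexp_summable: "summable (\<lambda>k. (1 / fact k) *\<^sub>R mpow A k)"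
proof -
  have t: "toop ((1 / fact k) *\<^sub>R mpow A k) = toop A ^ k /\<^sub>R fact k" for k
    by (simp only: toop_scaleR toop_mpow inverse_eq_divide)
  show ?thesis by (rule toop_suminf(1)) (unfold t, rule summable_exp_generic)
qed

lemma neg_power_scaleR: "(- x) ^ k = ((-1::real)^k) *\<^sub>R (x::'a::real_normed_algebra_1)^k"
proof (induction k)
  case (Suc k)
  have "(- x) ^ Suc k = (- x) * (((-1::real)^k) *\<^sub>R x^k)" by (simp only: power_Suc Suc)
  also have "\<dots> = ((-1::real)^Suc k) *\<^sub>R x^Suc k" by simp
  finally show ?case .
qed simp

lemma toop_dexp_series:
  "toop (\<Sum>k. ((-1)^k / fact (k + 1)) *\<^sub>R mpow M k) = phi (- toop M)"
    "summable (\<lambda>k. ((-1)^k / fact (k + 1)) *\<^sub>R mpow M k)"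
proof -
  have t: "toop (((-1)^k / fact (k + 1)) *\<^sub>R mpow M k) = (1 / fact (Suc k)) *\<^sub>R (- toop M)^k" for k
    by (simp only: toop_scaleR toop_mpow neg_power_scaleR[of "toop M"] scaleR_scaleR) simp
  have s: "summable (\<lambda>k. toop (((-1)^k / fact (k + 1)) *\<^sub>R mpow M k))"
    unfolding t by (rule summable_phi)
  from toop_suminf[OF s] show "toop (\<Sum>k. ((-1)^k / fact (k + 1)) *\<^sub>R mpow M k) = phi (- toop M)"
    "summable (\<lambda>k. ((-1)^k / fact (k + 1)) *\<^sub>R mpow M k)"
    by (simp_all only: t phi_def)
qed

lemma toop_phi_series:
  "toop (\<Sum>k. (1 / fact (k + 1)) *\<^sub>R mpow M k) = phi (toop M)"
proof -
  have t: "toop ((1 / fact (k + 1)) *\<^sub>R mpow M k) = (1 / fact (Suc k)) *\<^sub>R (toop M)^k" for k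
    by (simp add: toop_scaleR toop_mpow)
  have s: "summable (\<lambda>k. toop ((1 / fact (k + 1)) *\<^sub>R mpow M k))"
    unfolding t by (rule summable_phi)
  from toop_suminf(2)[OF s] show ?thesis by (simp only: t phi_def)
qed

lemma inv_props:
  assumes "invertible A"
  shows "A ** matrix_inv A = mat 1" "matrix_inv A ** A = mat 1"
proof -
  from assms obtain B where "A ** B = mat 1 \<and> B ** A = mat 1" unfolding invertible_def by blast
  hence "A ** matrix_inv A = mat 1 \<and> matrix_inv A ** A = mat 1"
    unfolding matrix_inv_def by (rule someI)
  thus "A ** matrix_inv A = mat 1" "matrix_inv A ** A = mat 1" by auto
qed

lemma matrix_inv_eq:
  fixes A B :: "real^'m^'m"
  assumes "A ** B = mat 1" "B ** A = mat 1"
  shows "invertible A" "matrix_inv A = B"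
proof -
  show i: "invertible A" using assms unfolding invertible_def by blast
  have "matrix_inv A = matrix_inv A ** (A ** B)" by (simp add: assms)
  also have "\<dots> = (matrix_inv A ** A) ** B" by (simp add: matrix_mul_assoc)
  also have "\<dots> = B" by (simp add: inv_props[OF i])
  finally show "matrix_inv A = B" .
qed

lemma exp_conj:
  fixes x y xi :: "'a::{real_normed_algebra_1,banach}"
  assumes l: "xi * x = 1" and r: "x * xi = 1"
  shows "exp (x * y * xi) = x * exp y * xi"
proof -
  have p: "(x * y * xi)^k = x * y^k * xi" for k
  proof (induction k)
    case 0 show ?case using r by simp
  next
    case (Suc k)
    have "(x * y * xi)^Suc k = (x * y * xi) * (x * y^k * xi)" by (simp only: power_Suc Suc.IH)
    also have "\<dots> = x * y * (xi * x) * y^k * xi" by (simp only: mult.assoc)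
    also have "\<dots> = x * y^Suc k * xi" by (simp add: l mult.assoc)
    finally show ?case .
  qed
  have "exp (x * y * xi) = (\<Sum>k. x * (y^k /\<^sub>R fact k) * xi)"
    by (simp add: exp_def p)
  also have "\<dots> = (\<Sum>k. x * (y^k /\<^sub>R fact k)) * xi"
    by (rule suminf_mult2[symmetric]) (rule summable_mult[OF summable_exp_generic])
  also have "(\<Sum>k. x * (y^k /\<^sub>R fact k)) = x * exp y"
    unfolding exp_def by (rule suminf_mult[OF summable_exp_generic])
  finally show ?thesis .
qed

lemma vd_quotient:
  fixes f :: "real \<Rightarrow> 'b::real_normed_vector"
  assumes "(f has_vector_derivative f') (at x)"
  shows "((\<lambda>y. (f y - f x) /\<^sub>R (y - x)) \<longlongrightarrow> f') (at x)"
proof -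
  from assms have "((\<lambda>y. ((f y - f x) - (y - x) *\<^sub>R f') /\<^sub>R norm (y - x)) \<longlongrightarrow> 0) (at x)"
    unfolding has_vector_derivative_def has_derivative_at_within[of _ _ x UNIV] by simp
  hence "((\<lambda>y. norm (((f y - f x) - (y - x) *\<^sub>R f') /\<^sub>R norm (y - x))) \<longlongrightarrow> 0) (at x)"
    using tendsto_norm_zero by blast
  moreover have "\<forall>\<^sub>F y in at x. norm (((f y - f x) - (y - x) *\<^sub>R f') /\<^sub>R norm (y - x))
      = norm ((f y - f x) /\<^sub>R (y - x) - f')"
  proof (rule eventually_at_filter[THEN iffD2, OF always_eventually], intro allI impI)
    fix y assume "y \<noteq> x"
    hence yx: "y - x \<noteq> 0" by simp
    have "(f y - f x) /\<^sub>R (y - x) - f' = (1 / (y - x)) *\<^sub>R ((f y - f x) - (y - x) *\<^sub>R f')"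
      using yx by (simp add: scaleR_diff_right inverse_eq_divide)
    thus "norm (((f y - f x) - (y - x) *\<^sub>R f') /\<^sub>R norm (y - x)) = norm ((f y - f x) /\<^sub>R (y - x) - f')"
      by (simp add: divide_inverse abs_inverse)
  qed
  ultimately have "((\<lambda>y. norm ((f y - f x) /\<^sub>R (y - x) - f')) \<longlongrightarrow> 0) (at x)"
    by (rule Lim_transform_eventually)
  hence "((\<lambda>y. (f y - f x) /\<^sub>R (y - x) - f') \<longlongrightarrow> 0) (at x)"
    by (rule tendsto_norm_zero_cancel)
  from tendsto_add[OF this tendsto_const[of f']] show ?thesis by simp
qed

lemma toop_inj: "toop A = toop B \<Longrightarrow> A = B"
  by (simp add: toop_eq_iff)

lemma wedge_linear: "wedge_map G W \<Longrightarrow> linear W" by (simp add: wedge_map_def)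
lemma wedge_inj: "wedge_map G W \<Longrightarrow> inj W" by (simp add: wedge_map_def)
lemma wedge_range: "wedge_map G W \<Longrightarrow> range W = lie_algebra G" by (simp add: wedge_map_def)

lemma vee_W: "wedge_map G W \<Longrightarrow> vee W (W y) = y"
  by (simp add: vee_def wedge_inj inv_f_f)

lemma W_vee: "wedge_map G W \<Longrightarrow> B \<in> lie_algebra G \<Longrightarrow> W (vee W B) = B"
  unfolding vee_def by (metis wedge_range f_inv_into_f)

lemma W_in: "wedge_map G W \<Longrightarrow> W y \<in> lie_algebra G"
  using wedge_range by blast

lemma lie_subspace: "wedge_map G W \<Longrightarrow> subspace (lie_algebra G)"
  by (metis wedge_range wedge_linear linear_subspace_image subspace_UNIV)

lemma lie_closed: "wedge_map G W \<Longrightarrow> closed (lie_algebra G)"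
  by (rule closed_subspace[OF lie_subspace])

lemma mexp_inv:
  "invertible (mexp B)" "matrix_inv (mexp B) = mexp (- B)"
proof -
  have 1: "mexp B ** mexp (- B) = mat 1"
    by (rule toop_inj) (simp add: toop_mult toop_mexp toop_neg toop_one exp_minus_inverse)
  have 2: "mexp (- B) ** mexp B = mat 1"
    by (rule toop_inj) (simp add: toop_mult toop_mexp toop_neg toop_one exp_minus_inverse[of "- toop B", simplified])
  show "invertible (mexp B)" "matrix_inv (mexp B) = mexp (- B)"
    using matrix_inv_eq[OF 1 2] by auto
qed

lemma G_inv: "matrix_Lie_group G \<Longrightarrow> X \<in> G \<Longrightarrow> invertible X"
  unfolding matrix_Lie_group_def by blast
lemma G_mult: "matrix_Lie_group G \<Longrightarrow> X \<in> G \<Longrightarrow> Y \<in> G \<Longrightarrow> X ** Y \<in> G"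
  unfolding matrix_Lie_group_def by blast
lemma G_matinv: "matrix_Lie_group G \<Longrightarrow> X \<in> G \<Longrightarrow> matrix_inv X \<in> G"
  unfolding matrix_Lie_group_def by blast

lemma toop_inv:
  assumes "invertible X"
  shows "toop (matrix_inv X) * toop X = 1" "toop X * toop (matrix_inv X) = 1"
  using inv_props[OF assms] by (simp_all add: toop_mult[symmetric] toop_one)

lemma Ad_closed:
  assumes G: "matrix_Lie_group G" and X: "X \<in> G" and B: "B \<in> lie_algebra G"
  shows "X ** B ** matrix_inv X \<in> lie_algebra G"
  unfolding lie_algebra_def
proof (intro CollectI allI)
  fix t :: real
  have iX: "invertible X" by (rule G_inv[OF G X])
  have "mexp (t *\<^sub>R (X ** B ** matrix_inv X)) = X ** mexp (t *\<^sub>R B) ** matrix_inv X"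
  proof (rule toop_inj)
    have "toop (mexp (t *\<^sub>R (X ** B ** matrix_inv X))) = exp (toop X * (t *\<^sub>R toop B) * toop (matrix_inv X))"
      by (simp add: toop_mexp toop_scaleR toop_mult)
    also have "\<dots> = toop X * exp (t *\<^sub>R toop B) * toop (matrix_inv X)"
      by (rule exp_conj[OF toop_inv[OF iX]])
    also have "\<dots> = toop (X ** mexp (t *\<^sub>R B) ** matrix_inv X)"
      by (simp add: toop_mexp toop_scaleR toop_mult)
    finally show "toop (mexp (t *\<^sub>R (X ** B ** matrix_inv X))) = toop (X ** mexp (t *\<^sub>R B) ** matrix_inv X)" .
  qed
  moreover have "mexp (t *\<^sub>R B) \<in> G" using B by (simp add: lie_algebra_def)
  ultimately show "mexp (t *\<^sub>R (X ** B ** matrix_inv X)) \<in> G"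
    using G_mult[OF G] G_matinv[OF G X] X by simp
qed

lemma bracket_closed:
  assumes G: "matrix_Lie_group G" and W: "wedge_map G W"
    and Z: "Z \<in> lie_algebra G" and Y: "Y \<in> lie_algebra G"
  shows "Z ** Y - Y ** Z \<in> lie_algebra G"
proof -
  define z where "z = toop Z"
  define y where "y = toop Y"
  define g where "g s = exp (s *\<^sub>R z) * y * exp (s *\<^sub>R (-z))" for s :: real
  define f where "f s = ofop (g s)" for s
  have fin: "f s \<in> lie_algebra G" for s
  proof -
    have "f s = mexp (s *\<^sub>R Z) ** Y ** matrix_inv (mexp (s *\<^sub>R Z))"
      by (rule toop_inj) (simp add: f_def g_def z_def y_def mexp_inv toop_mult toop_mexp toop_scaleR toop_neg)
    also have "\<dots> \<in> lie_algebra G"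
      by (rule Ad_closed[OF G _ Y]) (use Z in \<open>simp add: lie_algebra_def\<close>)
    finally show ?thesis .
  qed
  have "(g has_vector_derivative
      exp (0 *\<^sub>R z) * y * ((-z) * exp (0 *\<^sub>R (-z))) + (exp (0 *\<^sub>R z) * 0 + (z * exp (0 *\<^sub>R z)) * y) * exp (0 *\<^sub>R (-z))) (at 0)"
    unfolding g_def
    by (intro has_vector_derivative_mult has_vector_derivative_const
        exp_scaleR_has_vector_derivative_left)
  hence "(g has_vector_derivative z * y - y * z) (at 0)" by simp
  hence "(f has_vector_derivative ofop (z * y - y * z)) (at 0)"
    unfolding f_def by (rule bounded_linear.has_vector_derivative[OF bounded_linear_ofop])
  moreover have "ofop (z * y - y * z) = Z ** Y - Y ** Z"
    by (rule toop_inj) (simp add: z_def y_def toop_mult toop_diff)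
  ultimately have fd: "(f has_vector_derivative Z ** Y - Y ** Z) (at 0)" by simp
  show ?thesis
  proof (rule Lim_in_closed_set[OF lie_closed[OF W] _ _ vd_quotient[OF fd]])
    show "\<forall>\<^sub>F h in at 0. (f h - f 0) /\<^sub>R (h - 0) \<in> lie_algebra G"
      using lie_subspace[OF W] fin
      by (intro always_eventually allI) (simp add: subspace_diff subspace_scale)
  qed simp
qed

lemma vee_add: "wedge_map G W \<Longrightarrow> u \<in> lie_algebra G \<Longrightarrow> v \<in> lie_algebra G \<Longrightarrow>
    vee W (u + v) = vee W u + vee W v"
proof -
  assume W: "wedge_map G W" and u: "u \<in> lie_algebra G" and v: "v \<in> lie_algebra G"
  have "u + v = W (vee W u + vee W v)"
    by (simp add: linear_add[OF wedge_linear[OF W]] W_vee[OF W u] W_vee[OF W v])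
  thus ?thesis by (simp add: vee_W[OF W])
qed

lemma vee_scale: "wedge_map G W \<Longrightarrow> u \<in> lie_algebra G \<Longrightarrow> vee W (c *\<^sub>R u) = c *\<^sub>R vee W u"
proof -
  assume W: "wedge_map G W" and u: "u \<in> lie_algebra G"
  have "c *\<^sub>R u = W (c *\<^sub>R vee W u)"
    by (simp add: linear_scale[OF wedge_linear[OF W]] W_vee[OF W u])
  thus ?thesis by (simp add: vee_W[OF W])
qed

lemma vee_map_linear:
  fixes W :: "real^'n \<Rightarrow> real^'m^'m"
  assumes W: "wedge_map G W" and F: "linear F" and FL: "\<And>y. F (W y) \<in> lie_algebra G"
  shows "linear (\<lambda>y. vee W (F (W y)))"
proof (rule linearI)
  fix a b :: "real^'n" and c :: real
  show "vee W (F (W (a + b))) = vee W (F (W a)) + vee W (F (W b))"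
    by (simp add: linear_add[OF wedge_linear[OF W]] linear_add[OF F] vee_add[OF W FL FL])
  show "vee W (F (W (c *\<^sub>R a))) = c *\<^sub>R vee W (F (W a))"
    by (simp add: linear_scale[OF wedge_linear[OF W]] linear_scale[OF F] vee_scale[OF W FL])
qed

lemma lin_bracket: "linear (\<lambda>B. (A::real^'m^'m) ** B - B ** A)"
  by (rule linearI) (rule toop_inj, simp add: toop_mult toop_add toop_diff toop_scaleR algebra_simps)+

lemma lin_conj: "linear (\<lambda>B. (A::real^'m^'m) ** B ** (C::real^'m^'m))"
  by (rule linearI) (rule toop_inj, simp add: toop_mult toop_add toop_scaleR algebra_simps)+

lemma ad_mat_apply:
  assumes G: "matrix_Lie_group G" and W: "wedge_map G W"
  shows "ad_mat W z *v y = vee W (W z ** W y - W y ** W z)"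
    "W (ad_mat W z *v y) = W z ** W y - W y ** W z"
proof -
  have FL: "W z ** W y - W y ** W z \<in> lie_algebra G" for y
    by (rule bracket_closed[OF G W W_in[OF W] W_in[OF W]])
  have lin: "linear (\<lambda>y. vee W (W z ** W y - W y ** W z))"
    using vee_map_linear[OF W lin_bracket[of "W z"] FL] by simp
  show 1: "ad_mat W z *v y = vee W (W z ** W y - W y ** W z)"
    unfolding ad_mat_def by (rule matrix_works[OF lin[folded linear_matrix_vector_mul_eq]])
  show "W (ad_mat W z *v y) = W z ** W y - W y ** W z"
    unfolding 1 by (rule W_vee[OF W FL])
qed

lemma Ad_mat_apply:
  assumes G: "matrix_Lie_group G" and W: "wedge_map G W" and X: "X \<in> G"
  shows "W (Ad_mat W X *v y) = X ** W y ** matrix_inv X"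
proof -
  have FL: "X ** W y ** matrix_inv X \<in> lie_algebra G" for y
    by (rule Ad_closed[OF G X W_in[OF W]])
  have lin: "linear (\<lambda>y. vee W (X ** W y ** matrix_inv X))"
    using vee_map_linear[OF W lin_conj[of X "matrix_inv X"] FL] by simp
  have 1: "Ad_mat W X *v y = vee W (X ** W y ** matrix_inv X)"
    unfolding Ad_mat_def by (rule matrix_works[OF lin[folded linear_matrix_vector_mul_eq]])
  show ?thesis unfolding 1 by (rule W_vee[OF W FL])
qed

lemma solve_q:
  fixes xi xt ei e Lb Rb L R q :: "'a::ring_1"
  assumes a: "xi * xt = 1" and b: "ei * e = 1"
    and H: "xt * e * Lb + Rb * (xt * e) = xt * (e * q) + (xt * L + R * xt) * e"
  shows "q = Lb - ei * (L + xi * (R - Rb) * xt) * e"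
proof -
  have l1: "xi * (xt * z) = z" for z using a by (simp add: mult.assoc[symmetric])
  have l2: "ei * (e * z) = z" for z using b by (simp add: mult.assoc[symmetric])
  have "q = ei * (xi * (xt * (e * q)))" by (simp add: l1 l2)
  also have "xt * (e * q) = xt * e * Lb + Rb * (xt * e) - (xt * L + R * xt) * e"
    using H by (simp add: algebra_simps)
  also have "ei * (xi * (xt * e * Lb + Rb * (xt * e) - (xt * L + R * xt) * e))
      = Lb - ei * (L + xi * (R - Rb) * xt) * e"
    by (simp add: algebra_simps l1 l2)
  finally show ?thesis .
qed

lemma adp_W:
  assumes G: "matrix_Lie_group G" and W: "wedge_map G W"
  shows "adp (toop (W z)) k (toop (W y)) = toop (W (mpow (ad_mat W z) k *v y))"
proof (induction k)
  case 0 show ?case by simp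
next
  case (Suc k)
  show ?case
    by (simp add: adp_Suc Suc mpow_Suc matrix_vector_mul_assoc[symmetric]
        ad_mat_apply(2)[OF G W] toop_mult toop_diff)
qed

lemma bl_TW:
  fixes W :: "real^'n \<Rightarrow> real^'m^'m"
  assumes W: "wedge_map G W"
  shows "bounded_linear (\<lambda>B::real^'n^'n. toop (W (B *v v)))"
proof -
  have "linear (\<lambda>B::real^'n^'n. toop (W (B *v v)))"
    by (rule linearI) (simp_all add: matrix_vector_mult_add_rdistrib linear_add[OF wedge_linear[OF W]]
        toop_add toop_scaleR linear_scale[OF wedge_linear[OF W]] scaleR_matrix_vector_assoc[symmetric])
  thus ?thesis by (rule linear_conv_bounded_linear[THEN iffD1])
qed

lemma Q_transfer:
  assumes G: "matrix_Lie_group G" and W: "wedge_map G W"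
  shows "(\<Sum>k. qc (toop (W z)) (toop (W y)) k) = toop (W (dexp_series W z *v y))"
proof -
  let ?M = "ad_mat W z"
  have s: "summable (\<lambda>k. ((-1)^k / fact (k + 1)) *\<^sub>R mpow ?M k)" by (rule toop_dexp_series(2))
  have "toop (W (dexp_series W z *v y)) = (\<Sum>k. toop (W ((((-1)^k / fact (k + 1)) *\<^sub>R mpow ?M k) *v y)))"
    unfolding dexp_series_def by (rule bounded_linear.suminf[OF bl_TW[OF W] s])
  also have "\<dots> = (\<Sum>k. qc (toop (W z)) (toop (W y)) k)"
    by (simp add: qc_def adp_W[OF G W] scaleR_matrix_vector_assoc[symmetric] linear_scale[OF wedge_linear[OF W]] toop_scaleR)
  finally show ?thesis by simp
qed

lemma mpow_neg: "mpow (- M) k = ((-1::real)^k) *\<^sub>R mpow M k"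
  by (rule toop_inj) (simp add: toop_mpow toop_neg toop_scaleR neg_power_scaleR[of "toop M"])

lemma Ad_transfer:
  assumes G: "matrix_Lie_group G" and W: "wedge_map G W"
  shows "exp (- toop (W z)) * toop (W v) * exp (toop (W z)) = toop (W (mexp (- ad_mat W z) *v v))"
proof -
  let ?M = "ad_mat W z"
  have "toop (W (mexp (- ?M) *v v)) = (\<Sum>k. toop (W (((1 / fact k) *\<^sub>R mpow (- ?M) k) *v v)))"
    unfolding mexp_def by (rule bounded_linear.suminf[OF bl_TW[OF W] mexp_summable])
  also have "\<dots> = (\<Sum>k. 1^k *\<^sub>R adc (toop (W z)) (toop (W v)) k)"
    by (simp add: adc_def adp_W[OF G W] mpow_neg scaleR_matrix_vector_assoc[symmetric]
        linear_scale[OF wedge_linear[OF W]] toop_scaleR)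
  also have "\<dots> = exp (1 *\<^sub>R (- toop (W z))) * toop (W v) * exp (1 *\<^sub>R toop (W z))"
    by (rule Ad_series[symmetric])
  finally show ?thesis by simp
qed

lemma comm_inv:
  fixes di d e :: "'a::ring_1"
  assumes "di * d = 1" "d * di = 1" "d * e = e * d"
  shows "di * e = e * di"
proof -
  have "di * e = di * e * (d * di)" by (simp add: assms)
  also have "\<dots> = di * (e * d) * di" by (simp add: mult.assoc)
  also have "\<dots> = di * (d * e) * di" by (simp add: assms)
  also have "\<dots> = (di * d) * e * di" by (simp only: mult.assoc)
  also have "\<dots> = e * di" by (simp add: assms(1))
  finally show ?thesis .
qed

lemma neg_mv: "(- A) *v x = - ((A::real^'n^'m) *v x)"
  by (simp add: matrix_vector_mult_def vec_eq_iff sum_negf)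

theorem theorem1:
  fixes G :: "(real^'m^'m) set"
    and W :: "real^'n \<Rightarrow> real^'m^'m"
    and X Xb :: "real \<Rightarrow> real^'m^'m"
    and l r lb rb \<zeta> :: "real \<Rightarrow> real^'n"
  assumes G: "matrix_Lie_group G"
    and W: "wedge_map G W"
    and XG: "\<And>t. X t \<in> G" and XbG: "\<And>t. Xb t \<in> G"
    and dX: "\<And>t. (X has_vector_derivative (X t ** W (l t) + W (r t) ** X t)) (at t)"
    and dXb: "\<And>t. (Xb has_vector_derivative (Xb t ** W (lb t) + W (rb t) ** Xb t)) (at t)"
    and eta: "\<And>t. matrix_inv (X t) ** Xb t = mexp (W (\<zeta> t))"
    and dz: "\<And>t. \<zeta> differentiable (at t)"
    and inv: "\<And>t. invertible (dexp_series W (\<zeta> t))"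
  shows "\<forall>t. (\<zeta> has_vector_derivative
              (- (ad_mat W (lb t) *v \<zeta> t)
               + U_mat W (\<zeta> t) *v ((l t - lb t) + Ad_mat W (matrix_inv (X t)) *v (r t - rb t))))
              (at t)
          \<and> invertible (U_mat W (\<zeta> t))
          \<and> matrix_inv (U_mat W (\<zeta> t))
              = - (\<Sum>k. (1 / fact (k + 1)) *\<^sub>R mpow (ad_mat W (\<zeta> t)) k)"
proof (intro allI)
  fix t
  define M where "M = ad_mat W (\<zeta> t)"
  define D where "D = dexp_series W (\<zeta> t)"
  define Di where "Di = matrix_inv D"
  define EM where "EM = mexp (- M)"
  define V where "V = (\<Sum>k. (1 / fact (k + 1)) *\<^sub>R mpow M k)"
  define m where "m = toop M"
  have tD: "toop D = phi (- m)"
    unfolding D_def dexp_series_def m_def M_def by (rule toop_dexp_series(1))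
  have tEM: "toop EM = exp (- m)" by (simp add: EM_def toop_mexp toop_neg m_def)
  have tV: "toop V = phi m" unfolding V_def m_def by (rule toop_phi_series)
  have iD: "invertible D" unfolding D_def by (rule inv)
  have tDi: "toop Di * toop D = 1" "toop D * toop Di = 1"
    unfolding Di_def by (rule toop_inv[OF iD])+
  have em1: "exp (- m) * exp m = 1" using exp_minus_inverse[of "- m"] by simp
  have em2: "exp m * exp (- m) = 1" by (rule exp_minus_inverse)
  have tU: "toop (U_mat W (\<zeta> t)) = - (exp (- m) * toop Di)"
    by (simp add: U_mat_def toop_neg toop_mult toop_mexp m_def M_def Di_def D_def)
  have pm: "phi m = phi (- m) * exp m" by (rule phi_neg_exp[symmetric])
  have UV1: "U_mat W (\<zeta> t) ** (- V) = mat 1"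
  proof (rule toop_inj)
    have "exp (- m) * toop Di * (phi (- m) * exp m) = exp (- m) * (toop Di * phi (- m)) * exp m"
      by (simp add: mult.assoc)
    also have "\<dots> = 1" using tDi tD em1 by simp
    finally show "toop (U_mat W (\<zeta> t) ** - V) = toop (mat 1)"
      by (simp add: toop_mult toop_neg tU tV toop_one pm)
  qed
  have UV2: "(- V) ** U_mat W (\<zeta> t) = mat 1"
  proof (rule toop_inj)
    have "phi (- m) * exp m * (exp (- m) * toop Di) = phi (- m) * (exp m * exp (- m)) * toop Di"
      by (simp add: mult.assoc)
    also have "\<dots> = 1" using tDi tD em2 by simp
    finally show "toop (- V ** U_mat W (\<zeta> t)) = toop (mat 1)"
      by (simp add: toop_mult toop_neg tU tV toop_one pm)
  qed
  have part2: "invertible (U_mat W (\<zeta> t))" and part3: "matrix_inv (U_mat W (\<zeta> t)) = - V"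
    using matrix_inv_eq[OF UV1 UV2] by auto
  show "(\<zeta> has_vector_derivative
              (- (ad_mat W (lb t) *v \<zeta> t)
               + U_mat W (\<zeta> t) *v ((l t - lb t) + Ad_mat W (matrix_inv (X t)) *v (r t - rb t))))
              (at t)
          \<and> invertible (U_mat W (\<zeta> t))
          \<and> matrix_inv (U_mat W (\<zeta> t))
              = - (\<Sum>k. (1 / fact (k + 1)) *\<^sub>R mpow (ad_mat W (\<zeta> t)) k)"
  proof (intro conjI)
    show "invertible (U_mat W (\<zeta> t))" by (rule part2)
    show "matrix_inv (U_mat W (\<zeta> t)) = - (\<Sum>k. (1 / fact (k + 1)) *\<^sub>R mpow (ad_mat W (\<zeta> t)) k)"
      using part3 by (simp add: V_def M_def)
    define Xi where "Xi = matrix_inv (X t)"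
    have iX: "invertible (X t)" by (rule G_inv[OF G XG])
    have XiG: "Xi \<in> G" unfolding Xi_def by (rule G_matinv[OF G XG])
    have iXi: "matrix_inv Xi = X t"
      using matrix_inv_eq(2)[OF inv_props(2)[OF iX] inv_props(1)[OF iX]] by (simp add: Xi_def)
    define z' where "z' = vector_derivative \<zeta> (at t)"
    have hz: "(\<zeta> has_vector_derivative z') (at t)"
      unfolding z'_def by (rule vector_derivative_works[THEN iffD1, OF dz])
    have blW: "bounded_linear (\<lambda>v. toop (W v))"
      using linear_compose[OF wedge_linear[OF W] linear_toop]
      by (intro linear_conv_bounded_linear[THEN iffD1]) (simp add: o_def)
    define a where "a = toop (W (\<zeta> t))"
    define a' where "a' = toop (W z')"
    define q where "q = (\<Sum>k. qc a a' k)"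
    have hA: "((\<lambda>s. toop (W (\<zeta> s))) has_vector_derivative a') (at t)"
      unfolding a'_def by (rule bounded_linear.has_vector_derivative[OF blW hz])
    have hE: "((\<lambda>s. exp (toop (W (\<zeta> s)))) has_vector_derivative exp a * q) (at t)"
    proof -
      have "((\<lambda>s. exp (toop (W (\<zeta> s)))) has_derivative (\<lambda>h. exp a * (\<Sum>k. qc a (h *\<^sub>R a') k))) (at t)"
        using has_derivative_compose[OF hA[unfolded has_vector_derivative_def] exp_frechet]
        by (simp add: a_def)
      moreover have "(\<Sum>k. qc a (h *\<^sub>R a') k) = h *\<^sub>R q" for h
        unfolding q_def by (rule linear_scale[OF bounded_linear.linear[OF bl_Q]])
      ultimately show ?thesis by (simp add: has_vector_derivative_def)
    qed
    have hx: "((\<lambda>s. toop (X s)) has_vector_derivative toop (X t ** W (l t) + W (r t) ** X t)) (at t)"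
      by (rule bounded_linear.has_vector_derivative[OF bounded_linear_toop dX])
    have hxb: "((\<lambda>s. toop (Xb s)) has_vector_derivative toop (Xb t ** W (lb t) + W (rb t) ** Xb t)) (at t)"
      by (rule bounded_linear.has_vector_derivative[OF bounded_linear_toop dXb])
    have eqs: "toop (Xb s) = toop (X s) * exp (toop (W (\<zeta> s)))" for s
    proof -
      have i: "invertible (X s)" by (rule G_inv[OF G XG])
      have "Xb s = X s ** (matrix_inv (X s) ** Xb s)"
        by (simp add: matrix_mul_assoc inv_props(1)[OF i])
      thus ?thesis by (simp add: eta toop_mult toop_mexp)
    qed
    have hp: "((\<lambda>s. toop (Xb s)) has_vector_derivative
        toop (X t) * (exp a * q) + toop (X t ** W (l t) + W (r t) ** X t) * exp a) (at t)"
      unfolding eqs a_def[symmetric] using has_vector_derivative_mult[OF hx hE] by (simp add: a_def)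
    have H0: "toop (Xb t ** W (lb t) + W (rb t) ** Xb t) =
        toop (X t) * (exp a * q) + toop (X t ** W (l t) + W (r t) ** X t) * exp a"
      by (rule vector_derivative_unique_at[OF hxb hp])
    define xt where "xt = toop (X t)"
    define e where "e = exp a"
    define Lb where "Lb = toop (W (lb t))"
    define Rb where "Rb = toop (W (rb t))"
    define L where "L = toop (W (l t))"
    define R where "R = toop (W (r t))"
    have H: "xt * e * Lb + Rb * (xt * e) = xt * (e * q) + (xt * L + R * xt) * e"
      using H0 by (simp add: toop_add toop_mult eqs[of t] xt_def e_def a_def Lb_def Rb_def L_def R_def)
    have qeq: "q = Lb - exp (- a) * (L + toop Xi * (R - Rb) * xt) * e"
    proof (rule solve_q[OF _ _ H])
      show "toop Xi * xt = 1" unfolding Xi_def xt_def by (rule toop_inv(1)[OF iX])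
      show "exp (- a) * e = 1" using exp_minus_inverse[of "- a"] by (simp add: e_def)
    qed
    define w where "w = (l t - lb t) + Ad_mat W Xi *v (r t - rb t)"
    have Lv: "L + toop Xi * (R - Rb) * xt = toop (W (lb t + w))"
    proof -
      have "W (Ad_mat W Xi *v (r t - rb t)) = Xi ** W (r t - rb t) ** X t"
        using Ad_mat_apply[OF G W XiG] iXi by simp
      hence "toop (W (Ad_mat W Xi *v (r t - rb t))) = toop Xi * (R - Rb) * xt"
        by (simp add: toop_mult toop_diff linear_diff[OF wedge_linear[OF W]] R_def Rb_def xt_def)
      moreover have "lb t + w = l t + Ad_mat W Xi *v (r t - rb t)" by (simp add: w_def)
      ultimately show ?thesis
        by (simp add: linear_add[OF wedge_linear[OF W]] toop_add L_def)
    qed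
    have Adv: "exp (- a) * toop (W (lb t + w)) * e = toop (W (EM *v (lb t + w)))"
      unfolding a_def e_def EM_def M_def by (rule Ad_transfer[OF G W])
    have qD: "q = toop (W (D *v z'))"
      unfolding q_def a_def a'_def D_def by (rule Q_transfer[OF G W])
    have "toop (W (D *v z')) = toop (W (lb t - EM *v (lb t + w)))"
      using qeq unfolding qD Lv Adv
      by (simp add: toop_diff linear_diff[OF wedge_linear[OF W]] Lb_def)
    hence Dz: "D *v z' = lb t - EM *v (lb t + w)"
      using wedge_inj[OF W] toop_inj by (metis injD)
    have DM: "D ** M = mat 1 - EM"
    proof (rule toop_inj)
      have "phi (- m) * (- m) = exp (- m) - 1" by (rule phi_x)
      hence "phi (- m) * m = 1 - exp (- m)" by (simp add: algebra_simps)
      thus "toop (D ** M) = toop (mat 1 - EM)"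
        by (simp add: toop_mult toop_diff toop_one tD tEM m_def[symmetric])
    qed
    have DiEM: "Di ** EM = EM ** Di"
    proof (rule toop_inj)
      have c: "toop D * toop EM = toop EM * toop D"
        unfolding tD tEM by (rule commute_phi) (use exp_times_arg_commute[of "- m"] in simp)
      show "toop (Di ** EM) = toop (EM ** Di)"
        unfolding toop_mult by (rule comm_inv[OF tDi c])
    qed
    have DiD: "Di ** D = mat 1" unfolding Di_def by (rule inv_props(2)[OF iD])
    have "z' = Di *v (D *v z')" by (simp add: matrix_vector_mul_assoc DiD)
    also have "\<dots> = (Di ** (mat 1 - EM)) *v lb t - (Di ** EM) *v w"
      unfolding Dz by (simp add: matrix_vector_mul_assoc[symmetric] algebra_simps)
    also have "Di ** (mat 1 - EM) = M"
      by (simp add: DM[symmetric] matrix_mul_assoc DiD)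
    also have "M *v lb t = - (ad_mat W (lb t) *v \<zeta> t)"
    proof (rule injD[OF wedge_inj[OF W]])
      show "W (M *v lb t) = W (- (ad_mat W (lb t) *v \<zeta> t))"
        by (simp add: M_def ad_mat_apply(2)[OF G W] linear_neg[OF wedge_linear[OF W]])
    qed
    also have "(Di ** EM) *v w = - (U_mat W (\<zeta> t) *v w)"
      unfolding DiEM by (simp add: U_mat_def neg_mv EM_def M_def Di_def D_def)
    finally have "z' = - (ad_mat W (lb t) *v \<zeta> t) + U_mat W (\<zeta> t) *v w" by simp
    thus "(\<zeta> has_vector_derivative
              (- (ad_mat W (lb t) *v \<zeta> t)
               + U_mat W (\<zeta> t) *v ((l t - lb t) + Ad_mat W (matrix_inv (X t)) *v (r t - rb t))))
              (at t)"
      using hz by (simp add: w_def Xi_def)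
  qed
qed

end
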